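(* Let $X \subseteq \mathbb{Z}^{\omega}$ be closed under tail-equivalence. Then $X$ is homogeneous in $\mathbb{Z}^{\omega}$: for every open interval $I$ of $\mathbb{Z}^{\omega}$ we have $X \cong X\cap I$ (order-isomorphism). In particular, $X \cong X \cap I_r$ for every nonempty finite integer sequence $r$, where $I_r$ is the set of elements of $\mathbb{Z}^{\omega}$ beginning with $r$.
   Context: $\mathbb{Z}^{\omega}$ is the set of integer sequences with the lexicographic order ($u<v$ iff $u_n<v_n$ at the least $n$ with $u_n\ne v_n$). For a finite nonempty integer sequence $r$ and a sequence $u$, $ru$ is concatenation. $u,v\in\mathbb{Z}^{\omega}$ are tail-equivalent if $u=ru'$ and $v=su'$ for some finite sequences $r,s$ (possibly of different lengths) and some $u'\in\mathbb{Z}^{\omega}$; $X$ is closed under tail-equivalence if it is a union of tail-equivalence classes. An open interval of a linear order is a nonempty convex subset with neither a greatest nor a least element (its endpoints, if any, may be gaps of $\mathbb{Z}^{\omega}$). *)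

theory Defs
  imports Main
begin

type_synonym zseq = "nat \<Rightarrow> int"

definition lex_less :: "zseq \<Rightarrow> zseq \<Rightarrow> bool" where
  "lex_less u v \<longleftrightarrow> (\<exists>n. (\<forall>m<n. u m = v m) \<and> u n < v n)"

definition lex_le :: "zseq \<Rightarrow> zseq \<Rightarrow> bool" where
  "lex_le u v \<longleftrightarrow> lex_less u v \<or> u = v"

definition conc :: "int list \<Rightarrow> zseq \<Rightarrow> zseq" where
  "conc r u = (\<lambda>n. if n < length r then r ! n else u (n - length r))"

definition tail_equiv :: "zseq \<Rightarrow> zseq \<Rightarrow> bool" where
  "tail_equiv u v \<longleftrightarrow> (\<exists>r s w. u = conc r w \<and> v = conc s w)"

definition closed_tail_equiv :: "zseq set \<Rightarrow> bool" where
  "closed_tail_equiv X \<longleftrightarrow> (\<forall>u v. u \<in> X \<longrightarrow> tail_equiv u v \<longrightarrow> v \<in> X)"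

definition open_interval :: "zseq set \<Rightarrow> bool" where
  "open_interval I \<longleftrightarrow> I \<noteq> {}
     \<and> (\<forall>a b c. a \<in> I \<longrightarrow> c \<in> I \<longrightarrow> lex_le a b \<longrightarrow> lex_le b c \<longrightarrow> b \<in> I)
     \<and> (\<forall>a\<in>I. \<exists>b\<in>I. lex_less a b)
     \<and> (\<forall>a\<in>I. \<exists>b\<in>I. lex_less b a)"

definition lex_iso :: "zseq set \<Rightarrow> zseq set \<Rightarrow> bool" where
  "lex_iso A B \<longleftrightarrow> (\<exists>f. bij_betw f A B \<and>
     (\<forall>u\<in>A. \<forall>v\<in>A. lex_less u v \<longleftrightarrow> lex_less (f u) (f v)))"

definition cyl :: "int list \<Rightarrow> zseq set" where
  "cyl r = {u. \<exists>w. u = conc r w}"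

end

theory Submission
  imports Defs
begin


lemma lex_irrefl[simp]: "\<not> lex_less u u"
  by (auto simp: lex_less_def)

lemma lex_trans: "lex_less u v \<Longrightarrow> lex_less v w \<Longrightarrow> lex_less u w"
proof -
  assume "lex_less u v" "lex_less v w"
  then obtain n m where n: "\<forall>k<n. u k = v k" "u n < v n" and m: "\<forall>k<m. v k = w k" "v m < w m"
    by (auto simp: lex_less_def)
  show ?thesis
  proof (cases n m rule: linorder_cases)
    case less then show ?thesis using n m unfolding lex_less_def
      by (intro exI[of _ n]) auto
  next
    case equal then show ?thesis using n m unfolding lex_less_def
      by (intro exI[of _ n]) auto
  next
    case greater then show ?thesis using n m unfolding lex_less_def
      by (intro exI[of _ m]) auto
  qed
qed

lemma lex_asym: "lex_less u v \<Longrightarrow> \<not> lex_less v u"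
  using lex_trans lex_irrefl by blast

lemma lex_total: "u \<noteq> v \<Longrightarrow> lex_less u v \<or> lex_less v u"
proof -
  assume "u \<noteq> v"
  then have "\<exists>n. u n \<noteq> v n" by auto
  define n where "n = (LEAST n. u n \<noteq> v n)"
  have a: "u n \<noteq> v n" unfolding n_def by (rule LeastI_ex) fact
  have b: "\<forall>k<n. u k = v k" unfolding n_def using not_less_Least by blast
  show ?thesis
  proof (cases "u n < v n")
    case True then show ?thesis using b unfolding lex_less_def by blast
  next
    case False then have "v n < u n" using a by auto
    then show ?thesis using b unfolding lex_less_def by (metis)
  qed
qed

lemma lex_le_not_less: "lex_le u v \<Longrightarrow> \<not> lex_less v u"
  unfolding lex_le_def using lex_asym by auto

lemma lex_witness: "(\<forall>k<n. u k = v k) \<Longrightarrow> u n < v n \<Longrightarrow> lex_less u v"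
  unfolding lex_less_def by blast

lemma conc_nth_less[simp]: "n < length r \<Longrightarrow> conc r u n = r ! n"
  by (simp add: conc_def)
lemma conc_nth_ge: "length r \<le> n \<Longrightarrow> conc r u n = u (n - length r)"
  by (simp add: conc_def)
lemma conc_nth_add[simp]: "conc r u (n + length r) = u n"
  by (simp add: conc_def)

lemma conc_less_iff[simp]: "lex_less (conc r u) (conc r v) \<longleftrightarrow> lex_less u v"
proof
  assume "lex_less u v"
  then obtain n where n: "\<forall>k<n. u k = v k" "u n < v n" by (auto simp: lex_less_def)
  show "lex_less (conc r u) (conc r v)"
  proof (rule lex_witness[of "n + length r"])
    show "\<forall>k<n + length r. conc r u k = conc r v k"
      using n(1) by (auto simp: conc_def)
  qed (use n in simp)
next
  assume "lex_less (conc r u) (conc r v)"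
  then obtain n where n: "\<forall>k<n. conc r u k = conc r v k" "conc r u n < conc r v n"
    by (auto simp: lex_less_def)
  have "length r \<le> n" using n(2) by (cases "n < length r") auto
  show "lex_less u v"
  proof (rule lex_witness[of "n - length r"])
    show "\<forall>k<n - length r. u k = v k"
    proof (intro allI impI)
      fix k assume "k < n - length r"
      then have "k + length r < n" by auto
      then show "u k = v k" using n(1) by (metis conc_nth_add)
    qed
    show "u (n - length r) < v (n - length r)" using n(2) \<open>length r \<le> n\<close> by (simp add: conc_def)
  qed
qed

lemma tail_equiv_iff: "tail_equiv u v \<longleftrightarrow> (\<exists>a b. \<forall>n. u (n + a) = v (n + b))"
proof
  assume "tail_equiv u v"
  then obtain r s w where "u = conc r w" "v = conc s w" by (auto simp: tail_equiv_def)
  then show "\<exists>a b. \<forall>n. u (n + a) = v (n + b)" by (intro exI[of _ "length r"] exI[of _ "length s"]) simp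
next
  assume "\<exists>a b. \<forall>n. u (n + a) = v (n + b)"
  then obtain a b where ab: "\<forall>n. u (n + a) = v (n + b)" by blast
  define w where "w = (\<lambda>n. u (n + a))"
  have "u = conc (map u [0..<a]) w"
    by (rule ext) (auto simp: conc_def w_def)
  moreover have "v = conc (map v [0..<b]) w"
  proof (rule ext)
    fix n show "v n = conc (map v [0..<b]) w n"
    proof (cases "n < b")
      case False
      then have "w (n - b) = v n" unfolding w_def using ab[rule_format, of "n - b"] by simp
      then show ?thesis using False by (simp add: conc_def)
    qed (simp add: conc_def)
  qed
  ultimately show "tail_equiv u v" unfolding tail_equiv_def by blast
qed

lemma tail_refl: "tail_equiv u u"
  unfolding tail_equiv_iff by auto

lemma tail_sym: "tail_equiv u v \<Longrightarrow> tail_equiv v u"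
  unfolding tail_equiv_iff by metis

lemma tail_trans: "tail_equiv u v \<Longrightarrow> tail_equiv v w \<Longrightarrow> tail_equiv u w"
proof -
  assume "tail_equiv u v" "tail_equiv v w"
  then obtain a b c d where ab: "\<forall>n. u (n + a) = v (n + b)" and cd: "\<forall>n. v (n + c) = w (n + d)"
    unfolding tail_equiv_iff by blast
  have "\<forall>n. u (n + (c + a)) = w (n + (b + d))"
  proof
    fix n
    have "u (n + (c + a)) = v ((n + c) + b)" using ab[rule_format, of "n + c"] by (simp add: add.assoc)
    also have "\<dots> = v ((n + b) + c)" by (simp add: ac_simps)
    also have "\<dots> = w ((n + b) + d)" using cd by blast
    finally show "u (n + (c + a)) = w (n + (b + d))" by (simp add: add.assoc)
  qed
  then show ?thesis unfolding tail_equiv_iff by blast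
qed

lemma tail_conc: "tail_equiv u (conc r u)"
  unfolding tail_equiv_iff by (intro exI[of _ 0] exI[of _ "length r"]) simp

definition neg :: "zseq \<Rightarrow> zseq" where "neg u = (\<lambda>n. - u n)"

lemma neg_neg[simp]: "neg (neg u) = u" by (simp add: neg_def)
lemma neg_less[simp]: "lex_less (neg u) (neg v) \<longleftrightarrow> lex_less v u"
  unfolding lex_less_def neg_def by (metis neg_equal_iff_equal neg_less_iff_less)
lemma neg_tail[simp]: "tail_equiv (neg u) (neg v) \<longleftrightarrow> tail_equiv u v"
  unfolding tail_equiv_iff neg_def by simp
lemma neg_inj: "inj neg" by (metis injI neg_neg)
lemma neg_image_UNIV[simp]: "neg ` UNIV = UNIV" by (metis surj_def neg_neg)

lemma mem_cyl: "z \<in> cyl t \<longleftrightarrow> (\<forall>i<length t. z i = t ! i)"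
proof
  assume "z \<in> cyl t" then show "\<forall>i<length t. z i = t ! i" by (auto simp: cyl_def)
next
  assume h: "\<forall>i<length t. z i = t ! i"
  have "z = conc t (\<lambda>n. z (n + length t))"
    by (rule ext) (auto simp: conc_def h)
  then show "z \<in> cyl t" by (auto simp: cyl_def)
qed

lemma cyl_eq_range: "cyl r = range (conc r)" by (auto simp: cyl_def)



definition tmap :: "(zseq \<Rightarrow> zseq) \<Rightarrow> zseq set \<Rightarrow> zseq set \<Rightarrow> bool" where
  "tmap f S T \<longleftrightarrow> bij_betw f S T \<and> (\<forall>u\<in>S. \<forall>v\<in>S. lex_less u v \<longrightarrow> lex_less (f u) (f v))
     \<and> (\<forall>u\<in>S. tail_equiv u (f u))"

definition tiso :: "zseq set \<Rightarrow> zseq set \<Rightarrow> bool" where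
  "tiso S T \<longleftrightarrow> (\<exists>f. tmap f S T)"

lemma tmap_app: "tmap f S T \<Longrightarrow> u \<in> S \<Longrightarrow> f u \<in> T"
  unfolding tmap_def bij_betw_def by blast
lemma tmap_mono: "tmap f S T \<Longrightarrow> u \<in> S \<Longrightarrow> v \<in> S \<Longrightarrow> lex_less u v \<Longrightarrow> lex_less (f u) (f v)"
  unfolding tmap_def by blast
lemma tmap_tail: "tmap f S T \<Longrightarrow> u \<in> S \<Longrightarrow> tail_equiv u (f u)"
  unfolding tmap_def by blast
lemma tmap_bij: "tmap f S T \<Longrightarrow> bij_betw f S T"
  unfolding tmap_def by blast

lemma tmap_iff: "tmap f S T \<Longrightarrow> u \<in> S \<Longrightarrow> v \<in> S \<Longrightarrow> lex_less (f u) (f v) \<longleftrightarrow> lex_less u v"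
proof
  assume f: "tmap f S T" and uv: "u \<in> S" "v \<in> S" and l: "lex_less (f u) (f v)"
  show "lex_less u v"
  proof (rule ccontr)
    assume "\<not> lex_less u v"
    then have "u = v \<or> lex_less v u" using lex_total by blast
    then show False
    proof
      assume "u = v" then show False using l by simp
    next
      assume "lex_less v u" then have "lex_less (f v) (f u)" using tmap_mono[OF f] uv by blast
      then show False using l lex_asym by blast
    qed
  qed
qed (rule tmap_mono)

lemma tiso_refl: "tiso S S"
  unfolding tiso_def tmap_def by (intro exI[of _ id]) (auto simp: tail_refl)

lemma tiso_sym: "tiso S T \<Longrightarrow> tiso T S"
proof -
  assume "tiso S T"
  then obtain f where f: "tmap f S T" by (auto simp: tiso_def)
  define g where "g = the_inv_into S f"
  have bij: "bij_betw f S T" using f by (rule tmap_bij)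
  have gb: "bij_betw g T S" unfolding g_def using bij by (rule bij_betw_the_inv_into)
  have fg: "f (g y) = y" if "y \<in> T" for y unfolding g_def using bij that
    by (rule f_the_inv_into_f_bij_betw)
  have gS: "g y \<in> S" if "y \<in> T" for y using gb that by (rule bij_betw_apply)
  have "tmap g T S"
    unfolding tmap_def
  proof (intro conjI ballI impI)
    fix u v assume "u \<in> T" "v \<in> T" "lex_less u v"
    then show "lex_less (g u) (g v)" using tmap_iff[OF f gS gS, of u v] fg by simp
  next
    fix u assume "u \<in> T"
    then show "tail_equiv u (g u)" using tmap_tail[OF f gS[of u]] fg[of u] tail_sym by simp
  qed (rule gb)
  then show ?thesis by (auto simp: tiso_def)
qed

lemma tiso_trans: "tiso S T \<Longrightarrow> tiso T U \<Longrightarrow> tiso S U"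
proof -
  assume "tiso S T" "tiso T U"
  then obtain f g where f: "tmap f S T" and g: "tmap g T U" by (auto simp: tiso_def)
  have "tmap (g \<circ> f) S U"
    unfolding tmap_def
  proof (intro conjI ballI impI)
    show "bij_betw (g \<circ> f) S U" using tmap_bij[OF f] tmap_bij[OF g] by (rule bij_betw_trans)
  next
    fix u v assume "u \<in> S" "v \<in> S" "lex_less u v"
    then show "lex_less ((g \<circ> f) u) ((g \<circ> f) v)"
      using tmap_mono[OF f] tmap_mono[OF g] tmap_app[OF f] by simp
  next
    fix u assume "u \<in> S"
    then show "tail_equiv u ((g \<circ> f) u)"
      using tmap_tail[OF f] tmap_tail[OF g] tmap_app[OF f] tail_trans by (metis comp_apply)
  qed
  then show ?thesis by (auto simp: tiso_def)
qed

lemma tmap_restrict: "tmap f S T \<Longrightarrow> S' \<subseteq> S \<Longrightarrow> tmap f S' (f ` S')"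
  unfolding tmap_def by (auto intro: bij_betw_subset)

lemma tiso_restrict: "tmap f S T \<Longrightarrow> S' \<subseteq> S \<Longrightarrow> tiso S' (f ` S')"
  using tmap_restrict tiso_def by blast

lemma conc_inj: "inj (conc r)"
  by (rule injI) (metis conc_less_iff lex_irrefl lex_total)

lemma tmap_conc: "tmap (conc r) S (conc r ` S)"
  unfolding tmap_def
proof (intro conjI ballI impI)
  show "bij_betw (conc r) S (conc r ` S)" using conc_inj
    by (meson bij_betw_imageI inj_on_subset subset_UNIV)
qed (auto simp: tail_conc)

lemma tiso_conc: "tiso S (conc r ` S)"
  using tmap_conc tiso_def by blast

lemma tiso_cyl: "tiso UNIV (cyl r)"
  using tiso_conc[of UNIV r] by (simp add: cyl_eq_range)

lemma neg_bij: "bij_betw neg A (neg ` A)"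
  using neg_inj by (meson bij_betw_imageI inj_on_subset subset_UNIV)

lemma neg_neg_image[simp]: "neg ` neg ` A = A"
  by (simp add: image_comp comp_def)

lemma tmap_neg: "tmap f S T \<Longrightarrow> tmap (neg \<circ> f \<circ> neg) (neg ` S) (neg ` T)"
proof -
  assume f: "tmap f S T"
  have nb2: "bij_betw neg (neg ` S) S" using neg_bij[of "neg ` S"] by simp
  have bij: "bij_betw (neg \<circ> f \<circ> neg) (neg ` S) (neg ` T)"
    using bij_betw_trans[OF bij_betw_trans[OF nb2 tmap_bij[OF f]] neg_bij] by (simp add: comp_assoc)
  show ?thesis unfolding tmap_def
  proof (intro conjI ballI impI bij)
    fix u v assume "u \<in> neg ` S" "v \<in> neg ` S" "lex_less u v"
    then show "lex_less ((neg \<circ> f \<circ> neg) u) ((neg \<circ> f \<circ> neg) v)"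
      using tmap_mono[OF f, of "neg v" "neg u"] by auto
  next
    fix u assume "u \<in> neg ` S"
    then show "tail_equiv u ((neg \<circ> f \<circ> neg) u)"
      using tmap_tail[OF f, of "neg u"] neg_tail[of u "f (neg u)"] by auto
  qed
qed

lemma tiso_neg: "tiso S T \<Longrightarrow> tiso (neg ` S) (neg ` T)"
  using tmap_neg tiso_def by blast



lemma tiso_sum:
  assumes iso: "\<forall>i\<in>K. tiso (P i) (A i)"
    and tot: "\<forall>i\<in>K. \<forall>j\<in>K. i \<noteq> j \<longrightarrow> R i j \<or> R j i"
    and ord: "\<forall>i\<in>K. \<forall>j\<in>K. R i j \<longrightarrow> (\<forall>x\<in>P i. \<forall>y\<in>P j. lex_less x y) \<and> (\<forall>x\<in>A i. \<forall>y\<in>A j. lex_less x y)"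
  shows "tiso (\<Union>i\<in>K. P i) (\<Union>i\<in>K. A i)"
proof -
  have "\<forall>i\<in>K. \<exists>f. tmap f (P i) (A i)" using iso unfolding tiso_def by blast
  then obtain F where F: "\<And>i. i \<in> K \<Longrightarrow> tmap (F i) (P i) (A i)" by metis
  have uniq: "i = j" if "i \<in> K" "j \<in> K" "x \<in> P i" "x \<in> P j" for i j x
  proof (rule ccontr)
    assume "i \<noteq> j"
    then have "R i j \<or> R j i" using tot that by blast
    then have "lex_less x x" using ord that by blast
    then show False by simp
  qed
  define idx where "idx x = (SOME i. i \<in> K \<and> x \<in> P i)" for x
  have idx: "idx x = i" if "i \<in> K" "x \<in> P i" for x i
  proof -
    have "idx x \<in> K \<and> x \<in> P (idx x)" unfolding idx_def by (rule someI[of _ i]) (use that in auto)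
    then show ?thesis using uniq that by blast
  qed
  define f where "f x = F (idx x) x" for x
  have fi: "f x = F i x" if "i \<in> K" "x \<in> P i" for x i using idx[OF that] f_def by simp
  have FA: "F i x \<in> A i" if "i \<in> K" "x \<in> P i" for x i using tmap_app[OF F[OF that(1)] that(2)] .
  have "tmap f (\<Union>i\<in>K. P i) (\<Union>i\<in>K. A i)"
    unfolding tmap_def
  proof (intro conjI ballI impI)
    show "bij_betw f (\<Union>i\<in>K. P i) (\<Union>i\<in>K. A i)"
      unfolding bij_betw_def
    proof
      show "inj_on f (\<Union>i\<in>K. P i)"
      proof (rule inj_onI)
        fix x y assume "x \<in> (\<Union>i\<in>K. P i)" "y \<in> (\<Union>i\<in>K. P i)" "f x = f y"
        then obtain i j where ij: "i \<in> K" "x \<in> P i" "j \<in> K" "y \<in> P j" "F i x = F j y" using fi by auto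
        show "x = y"
        proof (cases "i = j")
          case True then show ?thesis using tmap_bij[OF F[OF ij(1)]] ij unfolding bij_betw_def
            by (meson inj_onD)
        next
          case False
          then have "R i j \<or> R j i" using tot ij by blast
          then have "lex_less (F i x) (F j y) \<or> lex_less (F j y) (F i x)"
            using ord ij FA by blast
          then show ?thesis using ij(5) by simp
        qed
      qed
      show "f ` (\<Union>i\<in>K. P i) = (\<Union>i\<in>K. A i)"
      proof
        show "f ` (\<Union>i\<in>K. P i) \<subseteq> (\<Union>i\<in>K. A i)" using fi FA by auto
        show "(\<Union>i\<in>K. A i) \<subseteq> f ` (\<Union>i\<in>K. P i)"
        proof
          fix y assume "y \<in> (\<Union>i\<in>K. A i)"
          then obtain i where i: "i \<in> K" "y \<in> A i" by auto
          then obtain x where "x \<in> P i" "y = F i x" using tmap_bij[OF F[OF i(1)]] unfolding bij_betw_def by auto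
          then show "y \<in> f ` (\<Union>i\<in>K. P i)" using fi[OF i(1)] i(1) by (intro image_eqI[of _ _ x]) auto
        qed
      qed
    qed
  next
    fix x y assume x: "x \<in> (\<Union>i\<in>K. P i)" and y: "y \<in> (\<Union>i\<in>K. P i)" and xy: "lex_less x y"
    then obtain i j where ij: "i \<in> K" "x \<in> P i" "j \<in> K" "y \<in> P j" by auto
    show "lex_less (f x) (f y)"
    proof (cases "i = j")
      case True then show ?thesis using tmap_mono[OF F[OF ij(1)]] ij xy fi by simp
    next
      case False
      then have "R i j \<or> R j i" using tot ij by blast
      moreover have "\<not> R j i" using ord ij xy lex_asym by blast
      ultimately have "R i j" by blast
      then show ?thesis using ord ij FA fi by simp
    qed
  next
    fix x assume "x \<in> (\<Union>i\<in>K. P i)"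
    then obtain i where "i \<in> K" "x \<in> P i" by auto
    then show "tail_equiv x (f x)" using tmap_tail[OF F] fi by simp
  qed
  then show ?thesis by (auto simp: tiso_def)
qed

definition zer :: zseq where "zer = (\<lambda>_. 0)"
definition stl :: "zseq \<Rightarrow> zseq" where "stl u = (\<lambda>n. u (Suc n))"

lemma zer_conc: "conc [0] zer = zer"
  by (rule ext) (simp add: conc_def zer_def)

lemma zer_less_conc: "lex_less zer (conc [0] u) \<longleftrightarrow> lex_less zer u"
  using conc_less_iff[of "[0]" zer u] zer_conc by simp

lemma conc_stl: "conc [u 0] (stl u) = u"
  by (rule ext) (simp add: conc_def stl_def)

definition dmap :: "zseq \<Rightarrow> zseq" where
  "dmap u = (if lex_less zer u then conc [0] u else u)"

lemma pos_first: "0 < u 0 \<Longrightarrow> lex_less zer u"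
  by (rule lex_witness[of 0]) (auto simp: zer_def)
lemma neg_first: "u 0 < 0 \<Longrightarrow> lex_less u zer"
  by (rule lex_witness[of 0]) (auto simp: zer_def)

lemma tmap_dmap: "tmap dmap UNIV {u::zseq. u 0 \<le> 0}"
  unfolding tmap_def
proof (intro conjI ballI impI)
  show "bij_betw dmap UNIV {u::zseq. u 0 \<le> 0}"
    unfolding bij_betw_def
  proof
    show "inj dmap"
    proof (rule injI)
      fix u v assume e: "dmap u = dmap v"
      show "u = v"
      proof (cases "lex_less zer u"; cases "lex_less zer v")
        assume "lex_less zer u" "lex_less zer v"
        then show ?thesis using e conc_inj unfolding dmap_def by (simp add: inj_eq)
      next
        assume a: "lex_less zer u" "\<not> lex_less zer v"
        then have "v = conc [0] u" using e unfolding dmap_def by simp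
        then show ?thesis using a zer_less_conc by simp
      next
        assume a: "\<not> lex_less zer u" "lex_less zer v"
        then have "u = conc [0] v" using e unfolding dmap_def by simp
        then show ?thesis using a zer_less_conc by simp
      next
        assume "\<not> lex_less zer u" "\<not> lex_less zer v"
        then show ?thesis using e unfolding dmap_def by simp
      qed
    qed
    show "range dmap = {u::zseq. u 0 \<le> 0}"
    proof
      show "range dmap \<subseteq> {u::zseq. u 0 \<le> 0}"
        using pos_first by (auto simp: dmap_def conc_def) (meson not_le)
      show "{u::zseq. u 0 \<le> 0} \<subseteq> range dmap"
      proof
        fix w assume w: "w \<in> {u::zseq. u 0 \<le> (0::int)}"
        show "w \<in> range dmap"
        proof (cases "lex_less zer w")
          case True
          then have "w 0 = 0" using w neg_first lex_asym by force
          then have ww: "w = conc [0] (stl w)" using conc_stl[of w] by simp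
          then have "lex_less zer (stl w)" using True zer_less_conc by metis
          then have "dmap (stl w) = w" unfolding dmap_def using ww by simp
          then show ?thesis by (metis rangeI)
        next
          case False
          then have "dmap w = w" unfolding dmap_def by simp
          then show ?thesis by (metis rangeI)
        qed
      qed
    qed
  qed
next
  fix u v :: zseq assume uv: "lex_less u v"
  show "lex_less (dmap u) (dmap v)"
  proof (cases "lex_less zer u"; cases "lex_less zer v")
    assume "lex_less zer u" "lex_less zer v"
    then show ?thesis using uv unfolding dmap_def by simp
  next
    assume "lex_less zer u" "\<not> lex_less zer v"
    then show ?thesis using uv lex_trans by blast
  next
    assume a: "\<not> lex_less zer u" "lex_less zer v"
    then have "u = zer \<or> lex_less u zer" using lex_total by blast
    moreover have "lex_less zer (conc [0] v)" using a zer_less_conc by simp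
    ultimately show ?thesis using a unfolding dmap_def using lex_trans by auto
  next
    assume "\<not> lex_less zer u" "\<not> lex_less zer v"
    then show ?thesis using uv unfolding dmap_def by simp
  qed
next
  fix u show "tail_equiv u (dmap u)" unfolding dmap_def by (simp add: tail_conc tail_refl)
qed

definition tr :: "int \<Rightarrow> zseq \<Rightarrow> zseq" where "tr k u = u(0 := u 0 + k)"

lemma tr_inj: "inj (tr k)"
proof (rule injI)
  fix u v assume "tr k u = tr k v"
  then have "\<forall>n. tr k u n = tr k v n" by simp
  then have "\<forall>n. u n = v n" unfolding tr_def by (metis add_right_cancel fun_upd_apply)
  then show "u = v" by auto
qed

lemma tmap_tr: "tmap (tr k) S (tr k ` S)"
  unfolding tmap_def
proof (intro conjI ballI impI)
  show "bij_betw (tr k) S (tr k ` S)" using tr_inj by (meson bij_betw_imageI inj_on_subset subset_UNIV)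
next
  fix u v assume "lex_less u v"
  then obtain n where n: "\<forall>m<n. u m = v m" "u n < v n" by (auto simp: lex_less_def)
  show "lex_less (tr k u) (tr k v)"
    by (rule lex_witness[of n]) (use n in \<open>auto simp: tr_def\<close>)
next
  fix u show "tail_equiv u (tr k u)" unfolding tail_equiv_iff
    by (intro exI[of _ 1]) (auto simp: tr_def)
qed

lemma tiso_le: "tiso UNIV {u::zseq. u 0 \<le> k}"
proof -
  have "tr k ` {u::zseq. u 0 \<le> 0} = {u::zseq. u 0 \<le> k}"
  proof
    show "tr k ` {u::zseq. u 0 \<le> 0} \<subseteq> {u::zseq. u 0 \<le> k}" by (auto simp: tr_def)
    show "{u::zseq. u 0 \<le> k} \<subseteq> tr k ` {u::zseq. u 0 \<le> 0}"
    proof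
      fix w assume "w \<in> {u::zseq. u 0 \<le> k}"
      then have "w = tr k (w(0 := w 0 - k))" "w(0 := w 0 - k) \<in> {u::zseq. u 0 \<le> 0}"
        by (auto simp: tr_def)
      then show "w \<in> tr k ` {u::zseq. u 0 \<le> 0}" by blast
    qed
  qed
  then have "tiso {u::zseq. u 0 \<le> 0} {u::zseq. u 0 \<le> k}" using tiso_restrict[OF tmap_tr[of k UNIV], of "{u. u 0 \<le> 0}"] by simp
  moreover have "tiso UNIV {u::zseq. u 0 \<le> 0}" using tmap_dmap tiso_def by blast
  ultimately show ?thesis using tiso_trans by blast
qed

lemma tiso_ge: "tiso UNIV {u::zseq. k \<le> u 0}"
proof -
  have "neg ` {u::zseq. u 0 \<le> -k} = {u::zseq. k \<le> u 0}"
  proof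
    show "neg ` {u::zseq. u 0 \<le> -k} \<subseteq> {u::zseq. k \<le> u 0}" by (auto simp: neg_def)
    show "{u::zseq. k \<le> u 0} \<subseteq> neg ` {u::zseq. u 0 \<le> -k}"
    proof
      fix w assume "w \<in> {u::zseq. k \<le> u 0}"
      then have "w = neg (neg w)" "neg w \<in> {u::zseq. u 0 \<le> -k}" by (auto simp: neg_def)
      then show "w \<in> neg ` {u::zseq. u 0 \<le> -k}" by blast
    qed
  qed
  then show ?thesis using tiso_neg[OF tiso_le[of "-k"]] by simp
qed

lemma tiso_union2:
  assumes "tiso UNIV A" "tiso UNIV B" "\<forall>x\<in>A. \<forall>y\<in>B. lex_less x y"
  shows "tiso UNIV (A \<union> B)"
proof -
  define P where "P b = (if b then {u::zseq. 1 \<le> u 0} else {u::zseq. u 0 \<le> (0::int)})" for b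
  define Q where "Q b = (if b then B else A)" for b
  have "tiso (\<Union>b\<in>UNIV. P b) (\<Union>b\<in>UNIV. Q b)"
  proof (rule tiso_sum[where R = "\<lambda>i j. \<not> i \<and> j"])
    show "\<forall>i\<in>UNIV. tiso (P i) (Q i)"
    proof
      fix i :: bool
      have "tiso (P i) UNIV" unfolding P_def using tiso_le tiso_ge tiso_sym by simp
      moreover have "tiso UNIV (Q i)" unfolding Q_def using assms by simp
      ultimately show "tiso (P i) (Q i)" by (rule tiso_trans)
    qed
    show "\<forall>i\<in>UNIV. \<forall>j\<in>UNIV. i \<noteq> j \<longrightarrow> (\<not> i \<and> j) \<or> (\<not> j \<and> i)" by auto
    show "\<forall>i\<in>UNIV. \<forall>j\<in>UNIV. (\<not> i \<and> j) \<longrightarrow> (\<forall>x\<in>P i. \<forall>y\<in>P j. lex_less x y) \<and> (\<forall>x\<in>Q i. \<forall>y\<in>Q j. lex_less x y)"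
      using assms(3) unfolding P_def Q_def by (auto intro: lex_witness[of 0])
  qed
  moreover have "(\<Union>b\<in>UNIV. P b) = UNIV"
  proof -
    have "u \<in> P (0 < u 0)" for u unfolding P_def by auto
    then show ?thesis by blast
  qed
  moreover have "(\<Union>b\<in>UNIV. Q b) = A \<union> B" unfolding Q_def by auto
  ultimately show ?thesis by simp
qed

lemma tiso_omega:
  fixes A :: "nat \<Rightarrow> zseq set"
  assumes "\<forall>n. tiso UNIV (A n)" "\<forall>m n. m < n \<longrightarrow> (\<forall>x\<in>A m. \<forall>y\<in>A n. lex_less x y)"
  shows "tiso UNIV (\<Union>n. A n)"
proof -
  define P where "P n = cyl [int n]" for n :: nat
  have "tiso (\<Union>n\<in>UNIV. P n) (\<Union>n\<in>UNIV. A n)"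
  proof (rule tiso_sum[of UNIV P A "\<lambda>i j::nat. i < j"])
    show "\<forall>i\<in>UNIV. tiso (P i) (A i)"
      using assms tiso_trans[OF tiso_sym[OF tiso_cyl]] unfolding P_def by blast
    show "\<forall>i\<in>UNIV. \<forall>j\<in>UNIV. i \<noteq> j \<longrightarrow> i < j \<or> j < (i::nat)" by auto
    show "\<forall>i\<in>UNIV. \<forall>j\<in>UNIV. i < j \<longrightarrow> (\<forall>x\<in>P i. \<forall>y\<in>P j. lex_less x y) \<and> (\<forall>x\<in>A i. \<forall>y\<in>A j. lex_less x y)"
      using assms(2) unfolding P_def by (auto simp: mem_cyl intro: lex_witness[of 0])
  qed
  moreover have "(\<Union>n\<in>UNIV. P n) = {u::zseq. 0 \<le> u 0}"
  proof
    show "(\<Union>n\<in>UNIV. P n) \<subseteq> {u::zseq. 0 \<le> u 0}" unfolding P_def by (auto simp: mem_cyl)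
    show "{u::zseq. 0 \<le> u 0} \<subseteq> (\<Union>n\<in>UNIV. P n)"
    proof
      fix u :: zseq assume "u \<in> {u::zseq. 0 \<le> u 0}"
      then have "u \<in> P (nat (u 0))" unfolding P_def by (auto simp: mem_cyl)
      then show "u \<in> (\<Union>n\<in>UNIV. P n)" by blast
    qed
  qed
  ultimately show ?thesis using tiso_ge[of 0] tiso_trans by simp
qed



lemma int_has_max:
  fixes X :: "int set"
  assumes "x \<in> X" "\<forall>y\<in>X. y \<le> b"
  shows "\<exists>M\<in>X. \<forall>y\<in>X. y \<le> M"
proof -
  have fin: "finite (X \<inter> {x..b})" by auto
  have ne: "X \<inter> {x..b} \<noteq> {}" using assms by auto
  define M where "M = Max (X \<inter> {x..b})"
  have "M \<in> X" using Max_in[OF fin ne] M_def by auto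
  moreover have "x \<le> M" using Max_ge[OF fin] assms M_def by auto
  moreover have "y \<le> M" if "y \<in> X" for y
  proof (cases "x \<le> y")
    case True then show ?thesis using Max_ge[OF fin] assms that M_def by auto
  next
    case False then show ?thesis using \<open>x \<le> M\<close> by auto
  qed
  ultimately show ?thesis by blast
qed

definition pre :: "zseq \<Rightarrow> nat \<Rightarrow> int list" where "pre x n = map x [0..<n]"

lemma mem_cyl_pre: "z \<in> cyl (pre x n) \<longleftrightarrow> (\<forall>i<n. z i = x i)"
  by (simp add: mem_cyl pre_def)

lemma pre_Suc: "pre x (Suc n) = pre x n @ [x n]"
  by (simp add: pre_def)

lemma cyl_UNIV0: "cyl (pre x 0) = UNIV"
  by (auto simp: mem_cyl_pre)

lemma cyl_pre_mono: "a \<le> b \<Longrightarrow> cyl (pre x b) \<subseteq> cyl (pre x a)"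
  by (auto simp: mem_cyl_pre)

lemma pre_eq: "\<forall>i<n. x i = y i \<Longrightarrow> pre x n = pre y n"
  by (simp add: pre_def)

lemma downset_tiso:
  assumes ds: "\<forall>x\<in>S. \<forall>y. lex_less y x \<longrightarrow> y \<in> S"
    and ne: "S \<noteq> {}" and nm: "\<forall>x\<in>S. \<exists>y\<in>S. lex_less x y"
  shows "tiso UNIV S"
proof (cases "S = UNIV")
  case True then show ?thesis by (simp add: tiso_refl)
next
  case False
  have mono: "cyl (pre x b) \<subseteq> S" if "cyl (pre x a) \<subseteq> S" "a \<le> b" for x a b
    using cyl_pre_mono[OF that(2)] that(1) by blast
  have below: "cyl (pre y (Suc i)) \<subseteq> S" if "\<forall>j<i. y j = x j" "y i < x i" "x \<in> S" for x y i
  proof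
    fix z assume "z \<in> cyl (pre y (Suc i))"
    then have "\<forall>j<Suc i. z j = y j" by (simp add: mem_cyl_pre)
    then have "lex_less z x" using that by (intro lex_witness[of i]) auto
    then show "z \<in> S" using ds that by blast
  qed
  have none: "\<not> cyl (pre x 0) \<subseteq> S" for x using False cyl_UNIV0 by auto
  define E where "E n = {x. cyl (pre x (Suc n)) \<subseteq> S \<and> \<not> cyl (pre x n) \<subseteq> S}" for n
  have e1: "E n \<subseteq> S" for n unfolding E_def by (auto simp: mem_cyl_pre)
  have e2: "\<exists>n. x \<in> E n" if "x \<in> S" for x
  proof -
    from nm that obtain y where "y \<in> S" "lex_less x y" by auto
    then obtain i where i: "\<forall>j<i. x j = y j" "x i < y i" by (auto simp: lex_less_def)
    then have ex: "\<exists>k. cyl (pre x k) \<subseteq> S" using below[of i x y] \<open>y \<in> S\<close> by auto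
    define k where "k = (LEAST k. cyl (pre x k) \<subseteq> S)"
    have k1: "cyl (pre x k) \<subseteq> S" unfolding k_def using ex by (rule LeastI_ex)
    have "k \<noteq> 0"
    proof
      assume "k = 0" with k1 none[of x] show False by simp
    qed
    then obtain n where kn: "k = Suc n" by (cases k) auto
    have "\<not> cyl (pre x n) \<subseteq> S" using not_less_Least[of n "\<lambda>k. cyl (pre x k) \<subseteq> S"] kn k_def by auto
    then show ?thesis using k1 kn unfolding E_def by auto
  qed
  have e4: "n \<le> i" if "x \<in> E n" "y \<in> E n" "\<forall>j<i. x j = y j" "x i < y i" for x y n i
  proof (rule ccontr)
    assume "\<not> n \<le> i"
    then have "Suc i \<le> n" by auto
    have "y \<in> S" using e1 that(2) by blast
    then have "cyl (pre x (Suc i)) \<subseteq> S" using below[of i x y] that by auto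
    then have "cyl (pre x n) \<subseteq> S" using mono \<open>Suc i \<le> n\<close> by blast
    then show False using that(1) unfolding E_def by auto
  qed
  have e4': "\<forall>i<n. x i = y i" if "x \<in> E n" "y \<in> E n" for x y n
  proof (cases "x = y")
    case False
    then have "lex_less x y \<or> lex_less y x" using lex_total by blast
    then show ?thesis
    proof
      assume "lex_less x y"
      then obtain i where i: "\<forall>j<i. x j = y j" "x i < y i" by (auto simp: lex_less_def)
      then have "n \<le> i" using e4[OF that] by blast
      then show ?thesis using i(1) by auto
    next
      assume "lex_less y x"
      then obtain i where i: "\<forall>j<i. y j = x j" "y i < x i" by (auto simp: lex_less_def)
      then have "n \<le> i" using e4[OF that(2) that(1)] by blast
      then show ?thesis using i(1) by auto
    qed
  qed simp
  have e3: "lex_less x y" if "m < n" "x \<in> E m" "y \<in> E n" for x y m n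
  proof (rule ccontr)
    assume nl: "\<not> lex_less x y"
    have "x \<noteq> y"
    proof
      assume "x = y"
      then have "cyl (pre y (Suc m)) \<subseteq> S" using that(2) unfolding E_def by auto
      then have "cyl (pre y n) \<subseteq> S" using mono that(1) by auto
      then show False using that(3) unfolding E_def by auto
    qed
    then have "lex_less y x" using nl lex_total by blast
    then obtain i where i: "\<forall>j<i. y j = x j" "y i < x i" by (auto simp: lex_less_def)
    have "x \<in> S" using e1 that(2) by blast
    then have c1: "cyl (pre y (Suc i)) \<subseteq> S" using below[of i y x] i by auto
    have "n \<le> i"
    proof (rule ccontr)
      assume "\<not> n \<le> i"
      then have "cyl (pre y n) \<subseteq> S" using mono c1 by auto
      then show False using that(3) unfolding E_def by auto
    qed
    then have "pre x (Suc m) = pre y (Suc m)" using i that(1) by (intro pre_eq) auto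
    then have "cyl (pre y (Suc m)) \<subseteq> S" using that(2) unfolding E_def by auto
    then have "cyl (pre y n) \<subseteq> S" using mono that(1) by auto
    then show False using that(3) unfolding E_def by auto
  qed
  have e5: "E m \<noteq> {}" if h: "E n \<noteq> {}" "m < n" for m n
  proof -
    obtain x where x: "x \<in> E n" using h(1) by blast
    define y where "y = x(m := x m - 1)"
    have "cyl (pre y (Suc m)) \<subseteq> S"
    proof
      fix z assume "z \<in> cyl (pre y (Suc m))"
      then have "\<forall>j<Suc m. z j = y j" by (simp add: mem_cyl_pre)
      then have "lex_less z x" unfolding y_def by (intro lex_witness[of m]) auto
      then show "z \<in> S" using ds e1 x by blast
    qed
    moreover have "\<not> cyl (pre y m) \<subseteq> S"
    proof
      assume "cyl (pre y m) \<subseteq> S"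
      moreover have "pre y m = pre x m" unfolding y_def by (intro pre_eq) auto
      ultimately have "cyl (pre x n) \<subseteq> S" using mono that(2) by auto
      then show False using x unfolding E_def by auto
    qed
    ultimately show ?thesis unfolding E_def by auto
  qed
  have e6: "tiso UNIV (E n)" if h: "E n \<noteq> {}" for n
  proof -
    obtain x0 where x0: "x0 \<in> E n" using h by blast
    have bnd: "\<exists>b. \<forall>x\<in>E n. x n \<le> b"
    proof (rule ccontr)
      assume "\<not> (\<exists>b. \<forall>x\<in>E n. x n \<le> b)"
      then have ub: "\<forall>b. \<exists>x\<in>E n. b < x n" by (meson not_le)
      have "cyl (pre x0 n) \<subseteq> S"
      proof
        fix z assume "z \<in> cyl (pre x0 n)"
        then have zx: "\<forall>i<n. z i = x0 i" by (simp add: mem_cyl_pre)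
        obtain x where x: "x \<in> E n" "z n < x n" using ub by blast
        have "\<forall>i<n. x i = x0 i" using e4'[OF x(1) x0] .
        then have "lex_less z x" using zx x(2) by (intro lex_witness[of n]) auto
        then show "z \<in> S" using ds e1 x(1) by blast
      qed
      then show False using x0 unfolding E_def by auto
    qed
    then obtain b where b: "\<forall>y\<in>(\<lambda>x. x n) ` E n. y \<le> b" by auto
    obtain M where M: "M \<in> (\<lambda>x. x n) ` E n" "\<forall>y\<in>(\<lambda>x. x n) ` E n. y \<le> M"
      using int_has_max[of "x0 n" "(\<lambda>x. x n) ` E n" b] x0 b by auto
    obtain xM where xM: "xM \<in> E n" "xM n = M" using M(1) by auto
    define t where "t = pre x0 n"
    have En: "E n = {x. (\<forall>i<n. x i = x0 i) \<and> x n \<le> M}"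
    proof
      show "E n \<subseteq> {x. (\<forall>i<n. x i = x0 i) \<and> x n \<le> M}"
        using e4' x0 M(2) by auto
      show "{x. (\<forall>i<n. x i = x0 i) \<and> x n \<le> M} \<subseteq> E n"
      proof
        fix x assume x: "x \<in> {x. (\<forall>i<n. x i = x0 i) \<and> x n \<le> M}"
        have "cyl (pre x (Suc n)) \<subseteq> S"
        proof
          fix z assume "z \<in> cyl (pre x (Suc n))"
          then have z: "\<forall>j<Suc n. z j = x j" by (simp add: mem_cyl_pre)
          have xMS: "xM \<in> S" using e1 xM by blast
          show "z \<in> S"
          proof (cases "z n = M")
            case True
            have "\<forall>j<Suc n. z j = xM j" using z x e4'[OF xM(1) x0] True xM(2)
              by (auto simp: less_Suc_eq)
            then have "z \<in> cyl (pre xM (Suc n))" by (simp add: mem_cyl_pre)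
            moreover have "cyl (pre xM (Suc n)) \<subseteq> S" using xM unfolding E_def by auto
            ultimately show ?thesis by blast
          next
            case False
            then have "z n < xM n" using z x xM(2) by auto
            then have "lex_less z xM" using z x e4'[OF xM(1) x0] by (intro lex_witness[of n]) auto
            then show ?thesis using ds xMS by blast
          qed
        qed
        moreover have "pre x n = pre x0 n" using x by (intro pre_eq) auto
        ultimately show "x \<in> E n" using x0 unfolding E_def by auto
      qed
    qed
    have ceq: "conc t ` {v. v 0 \<le> M} = E n"
    proof
      show "conc t ` {v. v 0 \<le> M} \<subseteq> E n"
        unfolding En t_def by (auto simp: conc_def pre_def)
      show "E n \<subseteq> conc t ` {v. v 0 \<le> M}"
      proof
        fix x assume "x \<in> E n"
        then have x: "\<forall>i<n. x i = x0 i" "x n \<le> M" using En by auto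
        have "x = conc t (\<lambda>j. x (j + n))"
          by (rule ext) (auto simp: conc_def t_def pre_def x)
        then show "x \<in> conc t ` {v. v 0 \<le> M}" using x(2) by force
      qed
    qed
    have "tiso UNIV (conc t ` {v. v 0 \<le> M})" by (rule tiso_trans[OF tiso_le tiso_conc])
    then show ?thesis unfolding ceq .
  qed
  have Sun: "S = (\<Union>n. E n)"
  proof
    show "S \<subseteq> (\<Union>n. E n)"
    proof
      fix x assume "x \<in> S"
      then obtain n where "x \<in> E n" using e2 by blast
      then show "x \<in> (\<Union>n. E n)" by blast
    qed
    show "(\<Union>n. E n) \<subseteq> S" using e1 by blast
  qed
  show ?thesis
  proof (cases "\<forall>n. E n \<noteq> {}")
    case True
    then show ?thesis unfolding Sun using e6 e3 by (intro tiso_omega) auto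
  next
    case False
    then have ex: "\<exists>N. E N = {}" by auto
    define N where "N = (LEAST N. E N = {})"
    have EN: "E N = {}" unfolding N_def using ex by (rule LeastI_ex)
    have lt: "E n \<noteq> {}" if "n < N" for n using not_less_Least[of n "\<lambda>N. E N = {}"] that N_def by auto
    have ge: "E n = {}" if "N \<le> n" for n
    proof (cases "N = n")
      case False then show ?thesis using e5[of n N] EN that by force
    qed (use EN in simp)
    have Sfin: "S = (\<Union>n<N. E n)"
      using Sun ge by (auto simp: not_less[symmetric])
    have "N \<noteq> 0" using Sfin ne by auto
    have step: "\<forall>k. 0 < k \<longrightarrow> k \<le> N \<longrightarrow> tiso UNIV (\<Union>n<k. E n)"
    proof (intro allI)
      fix k show "0 < k \<longrightarrow> k \<le> N \<longrightarrow> tiso UNIV (\<Union>n<k. E n)"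
      proof (induction k)
        case (Suc k)
        show ?case
        proof (intro impI)
          assume "Suc k \<le> N"
          then have ek: "E k \<noteq> {}" using lt by auto
          show "tiso UNIV (\<Union>n<Suc k. E n)"
          proof (cases "k = 0")
            case True then show ?thesis using e6[OF ek] by (simp add: lessThan_Suc)
          next
            case False
            then have "tiso UNIV (\<Union>n<k. E n)" using Suc \<open>Suc k \<le> N\<close> by auto
            moreover have "(\<Union>n<Suc k. E n) = (\<Union>n<k. E n) \<union> E k"
              by (auto simp: lessThan_Suc)
            ultimately show ?thesis using e6[OF ek] e3
              by (metis (no_types, lifting) UN_E lessThan_iff tiso_union2)
          qed
        qed
      qed simp
    qed
    then show ?thesis using Sfin \<open>N \<noteq> 0\<close> by auto
  qed
qed

lemma upset_tiso:
  assumes us: "\<forall>x\<in>S. \<forall>y. lex_less x y \<longrightarrow> y \<in> S"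
    and ne: "S \<noteq> {}" and nm: "\<forall>x\<in>S. \<exists>y\<in>S. lex_less y x"
  shows "tiso UNIV S"
proof -
  have "tiso UNIV (neg ` S)"
  proof (rule downset_tiso)
    show "\<forall>x\<in>neg ` S. \<forall>y. lex_less y x \<longrightarrow> y \<in> neg ` S"
    proof (intro ballI allI impI)
      fix x y assume "x \<in> neg ` S" "lex_less y x"
      then obtain x' where x': "x' \<in> S" "x = neg x'" by auto
      then have "lex_less x' (neg y)" using \<open>lex_less y x\<close> neg_less[of "neg y" x'] by simp
      then have "neg y \<in> S" using us x' by blast
      then show "y \<in> neg ` S" by (metis image_eqI neg_neg)
    qed
    show "neg ` S \<noteq> {}" using ne by auto
    show "\<forall>x\<in>neg ` S. \<exists>y\<in>neg ` S. lex_less x y"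
      using nm by auto
  qed
  then show ?thesis using tiso_neg by fastforce
qed



lemma pullback_up:
  assumes C: "tiso UNIV C" and sub: "T \<subseteq> C" and ne: "T \<noteq> {}"
    and up: "\<forall>y\<in>T. \<forall>z\<in>C. lex_less y z \<longrightarrow> z \<in> T"
    and nm: "\<forall>y\<in>T. \<exists>y'\<in>T. lex_less y' y"
  shows "tiso UNIV T"
proof -
  obtain g where g: "tmap g UNIV C" using C by (auto simp: tiso_def)
  have surj: "\<exists>u. t = g u" if "t \<in> C" for t
    using tmap_bij[OF g] that unfolding bij_betw_def by auto
  define U where "U = {u. g u \<in> T}"
  have "tiso UNIV U"
  proof (rule upset_tiso)
    show "\<forall>x\<in>U. \<forall>y. lex_less x y \<longrightarrow> y \<in> U"
    proof (intro ballI allI impI)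
      fix x y assume "x \<in> U" "lex_less x y"
      then have "lex_less (g x) (g y)" "g x \<in> T" "g y \<in> C"
        using tmap_mono[OF g] tmap_app[OF g] U_def by auto
      then show "y \<in> U" using up U_def by blast
    qed
    show "U \<noteq> {}" using ne sub surj U_def by blast
    show "\<forall>x\<in>U. \<exists>y\<in>U. lex_less y x"
    proof
      fix x assume "x \<in> U"
      then obtain y' where y': "y' \<in> T" "lex_less y' (g x)" using nm U_def by blast
      then obtain v where v: "y' = g v" using surj sub by blast
      then have "lex_less v x" using tmap_iff[OF g, of v x] y' by simp
      then show "\<exists>y\<in>U. lex_less y x" using v y' U_def by blast
    qed
  qed
  moreover have "g ` U = T" using sub surj U_def by auto
  then have "tiso U T" using tiso_restrict[OF g, of U] by simp
  ultimately show ?thesis using tiso_trans by blast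
qed

lemma pullback_down:
  assumes C: "tiso UNIV C" and sub: "T \<subseteq> C" and ne: "T \<noteq> {}"
    and dn: "\<forall>y\<in>T. \<forall>z\<in>C. lex_less z y \<longrightarrow> z \<in> T"
    and nm: "\<forall>y\<in>T. \<exists>y'\<in>T. lex_less y y'"
  shows "tiso UNIV T"
proof -
  obtain g where g: "tmap g UNIV C" using C by (auto simp: tiso_def)
  have surj: "\<exists>u. t = g u" if "t \<in> C" for t
    using tmap_bij[OF g] that unfolding bij_betw_def by auto
  define U where "U = {u. g u \<in> T}"
  have "tiso UNIV U"
  proof (rule downset_tiso)
    show "\<forall>x\<in>U. \<forall>y. lex_less y x \<longrightarrow> y \<in> U"
    proof (intro ballI allI impI)
      fix x y assume "x \<in> U" "lex_less y x"
      then have "lex_less (g y) (g x)" "g x \<in> T" "g y \<in> C"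
        using tmap_mono[OF g] tmap_app[OF g] U_def by auto
      then show "y \<in> U" using dn U_def by blast
    qed
    show "U \<noteq> {}" using ne sub surj U_def by blast
    show "\<forall>x\<in>U. \<exists>y\<in>U. lex_less x y"
    proof
      fix x assume "x \<in> U"
      then obtain y' where y': "y' \<in> T" "lex_less (g x) y'" using nm U_def by blast
      then obtain v where v: "y' = g v" using surj sub by blast
      then have "lex_less x v" using tmap_iff[OF g, of x v] y' by simp
      then show "\<exists>y\<in>U. lex_less x y" using v y' U_def by blast
    qed
  qed
  moreover have "g ` U = T" using sub surj U_def by auto
  then have "tiso U T" using tiso_restrict[OF g, of U] by simp
  ultimately show ?thesis using tiso_trans by blast
qed

lemma open_tiso:
  assumes "open_interval I"
  shows "tiso UNIV I"
proof -
  have ne: "I \<noteq> {}"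
    and conv: "\<And>a b c. a \<in> I \<Longrightarrow> c \<in> I \<Longrightarrow> lex_le a b \<Longrightarrow> lex_le b c \<Longrightarrow> b \<in> I"
    and nmax: "\<forall>a\<in>I. \<exists>b\<in>I. lex_less a b"
    and nmin: "\<forall>a\<in>I. \<exists>b\<in>I. lex_less b a"
    using assms unfolding open_interval_def by blast+
  obtain a where aI: "a \<in> I" using ne by blast
  obtain b where bI: "b \<in> I" and ab: "lex_less a b" using nmax aI by blast
  obtain i where i: "\<forall>j<i. a j = b j" "a i < b i" using ab by (auto simp: lex_less_def)
  define c where "c = a(i := a i + 1)"
  define C where "C = {x. \<exists>j\<le>i. (\<forall>l<j. x l = c l) \<and> x j < c j}"
  have Cds: "\<forall>x\<in>C. \<forall>y. lex_less y x \<longrightarrow> y \<in> C"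
  proof (intro ballI allI impI)
    fix x y assume "x \<in> C" "lex_less y x"
    then obtain j where j: "j \<le> i" "\<forall>l<j. x l = c l" "x j < c j" unfolding C_def by blast
    obtain k where k: "\<forall>l<k. y l = x l" "y k < x k" using \<open>lex_less y x\<close> by (auto simp: lex_less_def)
    show "y \<in> C"
    proof (cases k j rule: linorder_cases)
      case less
      then have "(\<forall>l<k. y l = c l) \<and> y k < c k" using j k by auto
      then show ?thesis unfolding C_def using less j(1) by (intro CollectI exI[of _ k]) auto
    next
      case equal
      then have "(\<forall>l<j. y l = c l) \<and> y j < c j" using j k by auto
      then show ?thesis unfolding C_def using j(1) by blast
    next
      case greater
      then have "(\<forall>l<j. y l = c l) \<and> y j < c j" using j k by auto
      then show ?thesis unfolding C_def using j(1) by blast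
    qed
  qed
  have Cnm: "\<forall>x\<in>C. \<exists>y\<in>C. lex_less x y"
  proof
    fix x assume "x \<in> C"
    then obtain j where j: "j \<le> i" "\<forall>l<j. x l = c l" "x j < c j" unfolding C_def by blast
    define y where "y = x(Suc j := x (Suc j) + 1)"
    have "lex_less x y" unfolding y_def by (rule lex_witness[of "Suc j"]) auto
    moreover have "y \<in> C" unfolding C_def y_def using j by (intro CollectI exI[of _ j]) auto
    ultimately show "\<exists>y\<in>C. lex_less x y" by blast
  qed
  have aC: "a \<in> C" unfolding C_def c_def by (intro CollectI exI[of _ i]) auto
  have bC: "b \<notin> C"
  proof
    assume "b \<in> C"
    then obtain j where j: "j \<le> i" "\<forall>l<j. b l = c l" "b j < c j" unfolding C_def by blast
    show False
    proof (cases "j = i")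
      case True then show ?thesis using j i unfolding c_def by auto
    next
      case False then have "j < i" using j by auto
      then show ?thesis using j i unfolding c_def by auto
    qed
  qed
  have Cup: "\<forall>x\<in>-C. \<forall>y. lex_less x y \<longrightarrow> y \<in> -C" using Cds by blast
  have Ccnm: "\<forall>x\<in>-C. \<exists>y\<in>-C. lex_less y x"
  proof
    fix x assume x: "x \<in> -C"
    define y where "y = x(Suc i := x (Suc i) - 1)"
    have "lex_less y x" unfolding y_def by (rule lex_witness[of "Suc i"]) auto
    moreover have "y \<notin> C"
    proof
      assume "y \<in> C"
      then obtain j where j: "j \<le> i" "\<forall>l<j. y l = c l" "y j < c j" unfolding C_def by blast
      then have "(\<forall>l<j. x l = c l) \<and> x j < c j" unfolding y_def by auto
      then have "x \<in> C" unfolding C_def using j(1) by blast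
      then show False using x by blast
    qed
    ultimately show "\<exists>y\<in>-C. lex_less y x" by blast
  qed
  have lt: "lex_less x y" if "x \<in> C" "y \<notin> C" for x y
  proof -
    have "x \<noteq> y" using that by blast
    moreover have "\<not> lex_less y x" using Cds that by blast
    ultimately show ?thesis using lex_total by blast
  qed
  have tC: "tiso UNIV C" using downset_tiso[OF Cds _ Cnm] aC by blast
  have tCc: "tiso UNIV (-C)" using upset_tiso[OF Cup _ Ccnm] bC by blast
  have t1: "tiso UNIV (I \<inter> C)"
  proof (rule pullback_up[OF tC])
    show "I \<inter> C \<subseteq> C" by blast
    show "I \<inter> C \<noteq> {}" using aI aC by blast
    show "\<forall>y\<in>I \<inter> C. \<forall>z\<in>C. lex_less y z \<longrightarrow> z \<in> I \<inter> C"
    proof (intro ballI impI)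
      fix y z assume "y \<in> I \<inter> C" "z \<in> C" "lex_less y z"
      moreover have "lex_less z b" using lt \<open>z \<in> C\<close> bC by blast
      ultimately show "z \<in> I \<inter> C" using conv[of y b z] bI unfolding lex_le_def by blast
    qed
    show "\<forall>y\<in>I \<inter> C. \<exists>y'\<in>I \<inter> C. lex_less y' y"
      using nmin Cds by blast
  qed
  have t2: "tiso UNIV (I \<inter> -C)"
  proof (rule pullback_down[OF tCc])
    show "I \<inter> -C \<subseteq> -C" by blast
    show "I \<inter> -C \<noteq> {}" using bI bC by blast
    show "\<forall>y\<in>I \<inter> -C. \<forall>z\<in>-C. lex_less z y \<longrightarrow> z \<in> I \<inter> -C"
    proof (intro ballI impI)
      fix y z assume "y \<in> I \<inter> -C" "z \<in> -C" "lex_less z y"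
      moreover have "lex_less a z" using lt \<open>z \<in> -C\<close> aC by blast
      ultimately show "z \<in> I \<inter> -C" using conv[of a y z] aI unfolding lex_le_def by blast
    qed
    show "\<forall>y\<in>I \<inter> -C. \<exists>y'\<in>I \<inter> -C. lex_less y y'"
      using nmax Cup by blast
  qed
  have "tiso UNIV ((I \<inter> C) \<union> (I \<inter> -C))"
    using tiso_union2[OF t1 t2] lt by blast
  moreover have "(I \<inter> C) \<union> (I \<inter> -C) = I" by blast
  ultimately show ?thesis by simp
qed

lemma tiso_lex_iso:
  assumes X: "closed_tail_equiv X" and T: "tiso UNIV I"
  shows "lex_iso X (X \<inter> I)"
proof -
  obtain f where f: "tmap f UNIV I" using T by (auto simp: tiso_def)
  have inj: "inj f" using tmap_bij[OF f] by (simp add: bij_betw_def)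
  have img: "f ` X = X \<inter> I"
  proof
    show "f ` X \<subseteq> X \<inter> I"
      using X tmap_tail[OF f] tmap_app[OF f] unfolding closed_tail_equiv_def by blast
    show "X \<inter> I \<subseteq> f ` X"
    proof
      fix y assume y: "y \<in> X \<inter> I"
      then obtain u where u: "y = f u" using tmap_bij[OF f] unfolding bij_betw_def by auto
      have "tail_equiv y u" using tmap_tail[OF f, of u] u tail_sym by simp
      then have "u \<in> X" using X y unfolding closed_tail_equiv_def by blast
      then show "y \<in> f ` X" using u by blast
    qed
  qed
  have "bij_betw f X (X \<inter> I)" using inj img unfolding bij_betw_def by (meson inj_on_subset subset_UNIV)
  moreover have "\<forall>u\<in>X. \<forall>v\<in>X. lex_less u v \<longleftrightarrow> lex_less (f u) (f v)"
    using tmap_iff[OF f] by simp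
  ultimately show ?thesis unfolding lex_iso_def by blast
qed

theorem mainTheorem8:
  fixes X :: "zseq set"
  assumes "closed_tail_equiv X"
  shows "(\<forall>I. open_interval I \<longrightarrow> lex_iso X (X \<inter> I))
       \<and> (\<forall>r. r \<noteq> [] \<longrightarrow> lex_iso X (X \<inter> cyl r))"
  using tiso_lex_iso[OF assms] open_tiso tiso_cyl by blast


end
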